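(* Let $p$ be a positive integer with $\tau(p) > m'$, where $m'$ is the largest number of linearly independent constraint matrices that can be simultaneously active, i.e. $m' = \max_{X\in\mathscr{X}} \dim \operatorname{span}\{A_i : A_i\bullet X = b_i\}$. Fix $A_1,\dots,A_m$ and $b$. Then for a generic $C\in\mathbb{S}^n$ (that is, for all $C$ outside a Lebesgue measure zero subset of $\mathbb{S}^n$), problem (BM) has no spurious 2-critical points: every 2-critical point $Y$ of (BM) is a global minimizer of (BM), and hence $YY^T$ is an optimal solution of (SDP).
   Context: Let $\mathbb{S}^n$ be the space of real symmetric $n\times n$ matrices, with inner product $A\bullet B=\operatorname{trace}(A^TB)$ (also used for $A\in\mathbb{S}^n$, $B\in\mathbb{R}^{n\times n}$), and $\mathbb{S}^n_+$ the cone of positive semidefinite matrices. Let $m=m_1+m_2$, let $C,A_1,\dots,A_m\in\mathbb{S}^n$, $b\in\mathbb{R}^m$, $\mathcal{A}(X)=(A_1\bullet X,\dots,A_m\bullet X)$ and $\mathcal{A}^*(\lambda)=\sum_i\lambda_iA_i$. Let $\mathscr{X}=\{X\in\mathbb{S}^n_+ : A_i\bullet X=b_i \ (i\le m_1),\ A_i\bullet X\ge b_i\ (m_1<i\le m)\}$; assume $\mathscr{X}$ is nonempty and that (SDP): $\min_{X\in\mathscr{X}} C\bullet X$ attains its minimum. Problem (BM) is $\min_{Y\in\mathbb{R}^{n\times p}} C\bullet YY^T$ subject to $YY^T\in\mathscr{X}$. For $Y$, let $I(Y)=\{i\in[m]: A_i\bullet YY^T=b_i\}$ and $S(\lambda)=C-\mathcal{A}^*(\lambda)$.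 A point $Y$ is 1-critical for (BM) if $YY^T\in\mathscr{X}$ and there is $\lambda\in\mathbb{R}^{m_1}\times\mathbb{R}^{m_2}_+$ with $\lambda_i=0$ for $i\notin I(Y)$ and $S(\lambda)Y=0$; it is 2-critical if moreover (for such a $\lambda$) $S(\lambda)\bullet UU^T\ge 0$ for all $U\in\mathbb{R}^{n\times p}$ with $A_i\bullet UY^T=0$ for all $i\in I(Y)$. A critical point is spurious if it is not a global minimizer of (BM). $\tau(k)=\binom{k+1}{2}$. *)

theory Defs
  imports "HOL-Analysis.Analysis"
begin

(* Matrices in S^n are represented as real^'n^'n; n x p matrices as real^'p^'n.
   Constraint indices are 0-based: i < m1 equality, m1 <= i < m1+m2 inequality. *)

definition mdot :: "real^'n^'n \<Rightarrow> real^'n^'n \<Rightarrow> real" where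
  "mdot A B = trace (transpose A ** B)"

definition sym_mat :: "real^'n^'n \<Rightarrow> bool" where
  "sym_mat M \<longleftrightarrow> transpose M = M"

definition psd :: "real^'n^'n \<Rightarrow> bool" where
  "psd X \<longleftrightarrow> sym_mat X \<and> (\<forall>x. 0 \<le> x \<bullet> (X *v x))"

definition tau :: "nat \<Rightarrow> nat" where
  "tau k = (k + 1) choose 2"

definition sym_part :: "real^'n^'n \<Rightarrow> real^'n^'n" where
  "sym_part M = (1/2) *\<^sub>R (M + transpose M)"

definition gram :: "real^'p^'n \<Rightarrow> real^'n^'n" where
  "gram Y = Y ** transpose Y"

definition feasible :: "(nat \<Rightarrow> real^'n^'n) \<Rightarrow> (nat \<Rightarrow> real) \<Rightarrow> nat \<Rightarrow> nat \<Rightarrow> real^'n^'n \<Rightarrow> bool" where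
  "feasible A b m1 m2 X \<longleftrightarrow> psd X \<and> (\<forall>i<m1. mdot (A i) X = b i)
     \<and> (\<forall>i. m1 \<le> i \<and> i < m1 + m2 \<longrightarrow> mdot (A i) X \<ge> b i)"

definition active :: "(nat \<Rightarrow> real^'n^'n) \<Rightarrow> (nat \<Rightarrow> real) \<Rightarrow> nat \<Rightarrow> nat \<Rightarrow> real^'n^'n \<Rightarrow> nat set" where
  "active A b m1 m2 X = {i. i < m1 + m2 \<and> mdot (A i) X = b i}"

definition mprime :: "(nat \<Rightarrow> real^'n^'n) \<Rightarrow> (nat \<Rightarrow> real) \<Rightarrow> nat \<Rightarrow> nat \<Rightarrow> nat" where
  "mprime A b m1 m2 = Max {dim (A ` active A b m1 m2 X) | X. feasible A b m1 m2 X}"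

definition Smat :: "real^'n^'n \<Rightarrow> (nat \<Rightarrow> real^'n^'n) \<Rightarrow> nat \<Rightarrow> (nat \<Rightarrow> real) \<Rightarrow> real^'n^'n" where
  "Smat C A m lam = C - (\<Sum>i<m. lam i *\<^sub>R A i)"

definition sdp_opt :: "real^'n^'n \<Rightarrow> (nat \<Rightarrow> real^'n^'n) \<Rightarrow> (nat \<Rightarrow> real) \<Rightarrow> nat \<Rightarrow> nat \<Rightarrow> real^'n^'n \<Rightarrow> bool" where
  "sdp_opt C A b m1 m2 X \<longleftrightarrow> feasible A b m1 m2 X \<and>
     (\<forall>X'. feasible A b m1 m2 X' \<longrightarrow> mdot C X \<le> mdot C X')"

definition sdp_attains :: "real^'n^'n \<Rightarrow> (nat \<Rightarrow> real^'n^'n) \<Rightarrow> (nat \<Rightarrow> real) \<Rightarrow> nat \<Rightarrow> nat \<Rightarrow> bool" where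
  "sdp_attains C A b m1 m2 \<longleftrightarrow> (\<exists>X. sdp_opt C A b m1 m2 X)"

definition bm_global_min :: "real^'n^'n \<Rightarrow> (nat \<Rightarrow> real^'n^'n) \<Rightarrow> (nat \<Rightarrow> real) \<Rightarrow> nat \<Rightarrow> nat \<Rightarrow> real^'p^'n \<Rightarrow> bool" where
  "bm_global_min C A b m1 m2 Y \<longleftrightarrow> feasible A b m1 m2 (gram Y) \<and>
     (\<forall>Z::real^'p^'n. feasible A b m1 m2 (gram Z) \<longrightarrow> mdot C (gram Y) \<le> mdot C (gram Z))"

definition crit1_mult :: "real^'n^'n \<Rightarrow> (nat \<Rightarrow> real^'n^'n) \<Rightarrow> (nat \<Rightarrow> real) \<Rightarrow> nat \<Rightarrow> nat \<Rightarrow> real^'p^'n \<Rightarrow> (nat \<Rightarrow> real) \<Rightarrow> bool" where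
  "crit1_mult C A b m1 m2 Y lam \<longleftrightarrow>
     (\<forall>i. m1 \<le> i \<and> i < m1 + m2 \<longrightarrow> 0 \<le> lam i) \<and>
     (\<forall>i<m1 + m2. i \<notin> active A b m1 m2 (gram Y) \<longrightarrow> lam i = 0) \<and>
     Smat C A (m1 + m2) lam ** Y = 0"

definition one_critical :: "real^'n^'n \<Rightarrow> (nat \<Rightarrow> real^'n^'n) \<Rightarrow> (nat \<Rightarrow> real) \<Rightarrow> nat \<Rightarrow> nat \<Rightarrow> real^'p^'n \<Rightarrow> bool" where
  "one_critical C A b m1 m2 Y \<longleftrightarrow> feasible A b m1 m2 (gram Y) \<and>
     (\<exists>lam. crit1_mult C A b m1 m2 Y lam)"

definition two_critical :: "real^'n^'n \<Rightarrow> (nat \<Rightarrow> real^'n^'n) \<Rightarrow> (nat \<Rightarrow> real) \<Rightarrow> nat \<Rightarrow> nat \<Rightarrow> real^'p^'n \<Rightarrow> bool" where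
  "two_critical C A b m1 m2 Y \<longleftrightarrow> feasible A b m1 m2 (gram Y) \<and>
     (\<exists>lam. crit1_mult C A b m1 m2 Y lam \<and>
        (\<forall>U::real^'p^'n. (\<forall>i\<in>active A b m1 m2 (gram Y). mdot (A i) (U ** transpose Y) = 0)
            \<longrightarrow> 0 \<le> mdot (Smat C A (m1 + m2) lam) (gram U)))"

end

theory Submission
  imports Defs
begin


definition outer :: "real^'n \<Rightarrow> real^'n^'n" where
  "outer v = (\<chi> i j. v$i * v$j)"

lemma mdot_inner: "mdot A B = A \<bullet> B"
proof -
  have "mdot A B = (\<Sum>i\<in>UNIV. \<Sum>k\<in>UNIV. A$k$i * B$k$i)"
    unfolding mdot_def trace_def matrix_matrix_mult_def transpose_def by simp
  also have "\<dots> = (\<Sum>k\<in>UNIV. \<Sum>i\<in>UNIV. A$k$i * B$k$i)"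
    by (rule sum.swap)
  also have "\<dots> = A \<bullet> B" unfolding inner_vec_def by (simp add: inner_real_def)
  finally show ?thesis .
qed

lemma quad_expand: "x \<bullet> (X *v x) = (\<Sum>i\<in>UNIV. \<Sum>j\<in>UNIV. x$i * X$i$j * x$j)"
  unfolding inner_vec_def matrix_vector_mult_def
  by (simp add: sum_distrib_left mult.assoc)



lemma axis_quad: "axis i (1::real) \<bullet> (X *v axis j 1) = X$i$j"
  by (simp add: inner_axis' matrix_vector_mult_basis column_def)

lemma psd_sym: "psd X \<Longrightarrow> X$j$i = X$i$j"
  unfolding psd_def sym_mat_def by (metis transpose_def vec_lambda_beta)

lemma psd_diag_ge: "psd X \<Longrightarrow> X$i$i \<ge> 0"
  unfolding psd_def using axis_quad by metis

lemma psd_zero_diag: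
  assumes "psd X" "X$j$j = 0" shows "X$i$j = 0"
proof -
  have q: "0 \<le> 2 * t * X$i$j + X$i$i" for t
  proof -
    let ?x = "t *\<^sub>R axis j 1 + axis i (1::real)"
    have "0 \<le> ?x \<bullet> (X *v ?x)" using assms(1) unfolding psd_def by blast
    also have "?x \<bullet> (X *v ?x) = t*t*X$j$j + t * X$j$i + t * X$i$j + X$i$i"
      by (simp add: matrix_vector_right_distrib matrix_vector_mult_scaleR inner_add_left
          inner_add_right axis_quad algebra_simps)
    finally show ?thesis using assms(2) psd_sym[OF assms(1), of i j] by simp
  qed
  show ?thesis
  proof (rule ccontr)
    assume ne: "X$i$j \<noteq> 0"
    have "0 \<le> 2 * (-(X$i$i + 1) / (2 * X$i$j)) * X$i$j + X$i$i" by (rule q)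
    also have "\<dots> = -1" using ne by (simp add: field_simps)
    finally show False by simp
  qed
qed



lemma outer_quad: "x \<bullet> (outer c *v x) = (c \<bullet> x)^2"
proof -
  have "x \<bullet> (outer c *v x) = (\<Sum>i\<in>UNIV. \<Sum>j\<in>UNIV. x$i * (c$i * c$j) * x$j)"
    by (simp add: quad_expand outer_def)
  also have "\<dots> = (\<Sum>i\<in>UNIV. c$i * x$i) * (\<Sum>j\<in>UNIV. c$j * x$j)"
    by (simp add: sum_product algebra_simps)
  finally show ?thesis by (simp add: power2_eq_square inner_vec_def)
qed

lemma scaleR_mat_vec: "((a::real) *\<^sub>R (M::real^'n^'m)) *v x = a *\<^sub>R (M *v x)"
proof -
  show ?thesis
    by (simp add: matrix_vector_mult_def vec_eq_iff sum_distrib_left mult.assoc)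
qed

lemma outer_scale: "outer (a *\<^sub>R c) = (a*a) *\<^sub>R outer c"
  by (simp add: outer_def vec_eq_iff algebra_simps)

lemma outer_sym: "transpose (outer c) = outer c"
  by (simp add: outer_def transpose_def vec_eq_iff mult.commute)

lemma psd_step:
  assumes X: "psd X" and d: "X$i$i \<noteq> 0"
  defines "c \<equiv> column i X"
  shows "psd (X - (1 / X$i$i) *\<^sub>R outer c)"
    and "{j. (X - (1 / X$i$i) *\<^sub>R outer c)$j$j \<noteq> 0} \<subseteq> {j. X$j$j \<noteq> 0} - {i}"
proof -
  let ?d = "X$i$i"
  have dpos: "?d > 0" using psd_diag_ge[OF X, of i] d by simp
  have Xc: "X *v axis i 1 = c" by (simp add: c_def matrix_vector_mult_basis)
  have cx: "axis i 1 \<bullet> (X *v x) = c \<bullet> x" for x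
  proof -
    have "axis i 1 \<bullet> (X *v x) = (\<Sum>k\<in>UNIV. X$i$k * x$k)"
      by (simp add: inner_axis' matrix_vector_mult_def)
    also have "\<dots> = c \<bullet> x"
      by (simp add: c_def column_def inner_vec_def psd_sym[OF X])
    finally show ?thesis .
  qed
  have ci: "c \<bullet> axis i 1 = X$i$i"
    by (metis axis_quad Xc inner_commute)
  have xc: "x \<bullet> (X *v axis i 1) = c \<bullet> x" for x by (simp add: Xc inner_commute)
  show "psd (X - (1 / X$i$i) *\<^sub>R outer c)"
    unfolding psd_def
  proof
    show "sym_mat (X - (1 / X$i$i) *\<^sub>R outer c)"
      using psd_sym[OF X] unfolding sym_mat_def
      by (simp add: transpose_def vec_eq_iff outer_def mult.commute)
    show "\<forall>x. 0 \<le> x \<bullet> ((X - (1 / X$i$i) *\<^sub>R outer c) *v x)"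
    proof
      fix x
      let ?t = "(c \<bullet> x) / ?d"
      let ?y = "x - ?t *\<^sub>R axis i 1"
      have "0 \<le> ?y \<bullet> (X *v ?y)" using X unfolding psd_def by blast
      also have "?y \<bullet> (X *v ?y) = x \<bullet> (X *v x) - ?t * (c \<bullet> x) - ?t * (c \<bullet> x) + ?t * ?t * ?d"
        by (simp add: matrix_vector_mult_diff_distrib matrix_vector_mult_scaleR inner_diff_left
            inner_diff_right cx xc ci algebra_simps)
      also have "\<dots> = x \<bullet> (X *v x) - (1/?d) * (c \<bullet> x)^2"
        using dpos by (simp add: field_simps power2_eq_square)
      also have "\<dots> = x \<bullet> ((X - (1 / X$i$i) *\<^sub>R outer c) *v x)"
        by (simp add: matrix_vector_mult_diff_rdistrib scaleR_mat_vec inner_diff_right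
             outer_quad)
      finally show "0 \<le> x \<bullet> ((X - (1 / X$i$i) *\<^sub>R outer c) *v x)" .
    qed
  qed
  show "{j. (X - (1 / X$i$i) *\<^sub>R outer c)$j$j \<noteq> 0} \<subseteq> {j. X$j$j \<noteq> 0} - {i}"
  proof
    fix j assume j: "j \<in> {j. (X - (1 / X$i$i) *\<^sub>R outer c)$j$j \<noteq> 0}"
    have e: "(X - (1 / X$i$i) *\<^sub>R outer c)$j$j = X$j$j - (1/?d) * (X$j$i * X$j$i)"
      by (simp add: outer_def c_def column_def)
    show "j \<in> {j. X$j$j \<noteq> 0} - {i}"
    proof -
      have "j \<noteq> i" using j e d by (auto simp: field_simps)
      moreover have "X$j$j \<noteq> 0"
      proof
        assume z: "X$j$j = 0"
        then have "X$i$j = 0" by (rule psd_zero_diag[OF X])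
        then have "X$j$i = 0" using psd_sym[OF X] by metis
        then show False using j e z by simp
      qed
      ultimately show ?thesis by simp
    qed
  qed
qed

lemma psd_decomp: "psd X \<Longrightarrow> \<exists>vs. X = sum_list (map outer vs)"
proof (induction "card {j. X$j$j \<noteq> 0}" arbitrary: X rule: less_induct)
  case less
  show ?case
  proof (cases "\<exists>i. X$i$i \<noteq> 0")
    case False
    then have "X = 0" using psd_zero_diag[OF less.prems] by (simp add: vec_eq_iff)
    then show ?thesis by (intro exI[of _ "[]"]) simp
  next
    case True
    then obtain i where d: "X$i$i \<noteq> 0" by blast
    let ?c = "column i X"
    let ?X = "X - (1 / X$i$i) *\<^sub>R outer ?c"
    note st = psd_step[OF less.prems d]
    have "card {j. ?X$j$j \<noteq> 0} \<le> card ({j. X$j$j \<noteq> 0} - {i})"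
      by (rule card_mono[OF _ st(2)]) simp
    also have "\<dots> < card {j. X$j$j \<noteq> 0}"
      using d by (intro card_Diff1_less) auto
    finally obtain vs where vs: "?X = sum_list (map outer vs)"
      using less.hyps st(1) by blast
    have dpos: "X$i$i > 0" using psd_diag_ge[OF less.prems, of i] d by simp
    have "outer (sqrt (1 / X$i$i) *\<^sub>R ?c) = (1 / X$i$i) *\<^sub>R outer ?c"
      using dpos by (simp add: outer_scale)
    then have "X = sum_list (map outer (sqrt (1 / X$i$i) *\<^sub>R ?c # vs))"
      using vs by (simp add: algebra_simps)
    then show ?thesis by blast
  qed
qed

lemma psd_mdot_nonneg:
  assumes X: "psd X" and S: "\<forall>u. 0 \<le> u \<bullet> (S *v u)"
  shows "0 \<le> mdot S X"
proof -
  obtain vs where vs: "X = sum_list (map outer vs)" using psd_decomp[OF X] by blast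
  have o: "mdot S (outer v) = v \<bullet> (S *v v)" for v
    by (simp add: mdot_inner outer_def inner_vec_def matrix_vector_mult_def sum_distrib_left algebra_simps)
  show ?thesis unfolding vs
  proof (induction vs)
    case Nil then show ?case by (simp add: mdot_inner)
  next
    case (Cons v vs)
    then show ?case using S o[of v] by (simp add: mdot_inner inner_add_right)
  qed
qed



lemma sym_Smat:
  assumes "\<forall>i<m. sym_mat (A i)" "sym_mat C"
  shows "transpose (Smat C A m lam) = Smat C A m lam"
  using assms unfolding Smat_def sym_mat_def
  by (simp add: vec_eq_iff transpose_def sum_component)

lemma mdot_Smat: "mdot (Smat C A m lam) X = mdot C X - (\<Sum>i<m. lam i * mdot (A i) X)"
  by (simp add: Smat_def mdot_inner inner_diff_left inner_sum_left)

lemma mdot_gram_zero: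
  assumes "transpose S = S" "S ** Y = 0"
  shows "mdot S (gram Y) = 0"
  using assms unfolding mdot_def gram_def
  by (simp add: matrix_mul_assoc trace_0 flip: mat_0) 

lemma lowrank_psd:
  assumes so: "\<forall>U::real^'p^'n. (\<forall>i\<in>I. mdot (A i) (U ** transpose Y) = 0) \<longrightarrow> 0 \<le> mdot S (gram U)"
    and e: "Y *v e = 0" "e \<noteq> 0"
  shows "0 \<le> u \<bullet> (S *v u)"
proof -
  define U :: "real^'p^'n" where "U = (\<chi> i j. u$i * e$j)"
  have "U ** transpose Y = 0"
  proof -
    have "(\<Sum>j\<in>UNIV. e$j * Y$k$j) = 0" for k
    proof -
      have "(\<Sum>j\<in>UNIV. e$j * Y$k$j) = (Y *v e)$k"
        by (simp add: matrix_vector_mult_def mult.commute)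
      then show ?thesis using e by simp
    qed
    then show ?thesis
      by (simp add: U_def matrix_matrix_mult_def transpose_def vec_eq_iff mult.assoc
          flip: sum_distrib_left)
  qed
  then have "0 \<le> mdot S (gram U)" using so by (simp add: mdot_inner)
  also have "gram U = (e \<bullet> e) *\<^sub>R outer u"
    by (simp add: gram_def U_def outer_def matrix_matrix_mult_def transpose_def vec_eq_iff
        inner_vec_def sum_distrib_left sum_distrib_right algebra_simps)
  also have "mdot S ((e \<bullet> e) *\<^sub>R outer u) = (e \<bullet> e) * (u \<bullet> (S *v u))"
    by (simp add: mdot_inner outer_def inner_vec_def matrix_vector_mult_def sum_distrib_left algebra_simps)
  finally have h: "0 \<le> (e \<bullet> e) * (u \<bullet> (S *v u))" .
  moreover have "0 < e \<bullet> e" using e(2) by simp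
  ultimately show ?thesis by (simp add: zero_le_mult_iff)
qed

lemma lowrank_opt:
  fixes A :: "nat \<Rightarrow> real^'n^'n" and Y :: "real^'p^'n"
  assumes Asym: "\<forall>i<m1 + m2. sym_mat (A i)" and Csym: "sym_mat C"
    and tc: "two_critical C A b m1 m2 Y" and e: "Y *v e = 0" "e \<noteq> 0"
  shows "bm_global_min C A b m1 m2 Y \<and> sdp_opt C A b m1 m2 (gram Y)"
proof -
  let ?m = "m1 + m2"
  from tc obtain lam where fY: "feasible A b m1 m2 (gram Y)" and cm: "crit1_mult C A b m1 m2 Y lam"
    and so: "\<forall>U::real^'p^'n. (\<forall>i\<in>active A b m1 m2 (gram Y). mdot (A i) (U ** transpose Y) = 0)
            \<longrightarrow> 0 \<le> mdot (Smat C A ?m lam) (gram U)"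
    unfolding two_critical_def by blast
  let ?S = "Smat C A ?m lam"
  have Spsd: "\<forall>u. 0 \<le> u \<bullet> (?S *v u)" using lowrank_psd[OF so e] by blast
  have SY: "?S ** Y = 0" using cm unfolding crit1_mult_def by blast
  have St: "transpose ?S = ?S" using sym_Smat Asym Csym by blast
  have valY: "mdot C (gram Y) = (\<Sum>i<?m. lam i * b i)"
  proof -
    have "mdot ?S (gram Y) = 0" by (rule mdot_gram_zero[OF St SY])
    moreover have "lam i * mdot (A i) (gram Y) = lam i * b i" if "i < ?m" for i
    proof (cases "i \<in> active A b m1 m2 (gram Y)")
      case True then show ?thesis by (simp add: active_def)
    next
      case False then have "lam i = 0" using cm that unfolding crit1_mult_def by blast
      then show ?thesis by simp
    qed
    ultimately show ?thesis unfolding mdot_Smat by simp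
  qed
  have low: "mdot C (gram Y) \<le> mdot C X" if fX: "feasible A b m1 m2 X" for X
  proof -
    have "0 \<le> mdot ?S X" using psd_mdot_nonneg Spsd fX unfolding feasible_def by blast
    moreover have "(\<Sum>i<?m. lam i * b i) \<le> (\<Sum>i<?m. lam i * mdot (A i) X)"
    proof (rule sum_mono)
      fix i assume "i \<in> {..<?m}"
      then show "lam i * b i \<le> lam i * mdot (A i) X"
      proof (cases "i < m1")
        case True then show ?thesis using fX unfolding feasible_def by simp
      next
        case False
        then have "0 \<le> lam i" "b i \<le> mdot (A i) X" using \<open>i \<in> {..<?m}\<close> cm fX
          unfolding crit1_mult_def feasible_def by auto
        then show ?thesis by (simp add: mult_left_mono)
      qed
    qed
    ultimately show ?thesis unfolding valY using mdot_Smat[of C A ?m lam X] by linarith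
  qed
  show ?thesis unfolding bm_global_min_def sdp_opt_def using fY low by blast
qed



definition Emat :: "'n \<Rightarrow> 'n \<Rightarrow> real^'n^'n" where
  "Emat i j = (\<chi> a b. if a = i \<and> b = j then 1 else 0)"

lemma sum_delta2:
  fixes f :: "'a::finite \<Rightarrow> 'b::finite \<Rightarrow> real"
  shows "(\<Sum>i\<in>UNIV. \<Sum>j\<in>UNIV. if a = i \<and> c = j then f i j else 0) = (f a c :: real)"
proof -
  have "(\<Sum>j\<in>UNIV. if a = i \<and> c = j then f i j else 0) = (if a = i then f i c else 0)" for i
    by (cases "a = i") simp_all
  then show ?thesis by simp
qed

lemma mat_decomp: "(M::real^'n^'n) = (\<Sum>i\<in>UNIV. \<Sum>j\<in>UNIV. M$i$j *\<^sub>R Emat i j)"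
proof -
  have "(\<Sum>i\<in>UNIV. \<Sum>j\<in>UNIV. M$i$j *\<^sub>R Emat i j) $ a $ c = M $ a $ c" for a c
  proof -
    have "(\<Sum>i\<in>UNIV. \<Sum>j\<in>UNIV. M$i$j *\<^sub>R Emat i j) $ a $ c
        = (\<Sum>i\<in>UNIV. \<Sum>j\<in>UNIV. (if a = i \<and> c = j then M$i$j else 0))"
      by (simp add: sum_component Emat_def) (intro sum.cong refl, auto)
    also have "\<dots> = M$a$c" by (rule sum_delta2)
    finally show ?thesis .
  qed
  then show ?thesis by (simp add: vec_eq_iff)
qed

lemma in_span_entries:
  assumes "\<And>i j. M$i$j \<noteq> 0 \<Longrightarrow> Emat i j \<in> span X"
  shows "(M::real^'n^'n) \<in> span X"
proof -
  have "M$i$j *\<^sub>R Emat i j \<in> span X" for i j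
    using assms[of i j] by (cases "M$i$j = 0") (auto intro: span_mul simp: span_zero)
  then have "(\<Sum>i\<in>UNIV. \<Sum>j\<in>UNIV. M$i$j *\<^sub>R Emat i j) \<in> span X"
    by (intro span_sum) auto
  then show ?thesis using mat_decomp[of M] by simp
qed

lemma in_span_pairs:
  assumes "\<And>i j. M$i$j \<noteq> 0 \<Longrightarrow> Emat i j + s *\<^sub>R Emat j i \<in> span X"
    and "\<And>i j. M$j$i = s * M$i$j"
    and "s * s = 1"
  shows "(M::real^'n^'n) \<in> span X"
proof -
  have h: "(M$i$j / 2) *\<^sub>R (Emat i j + s *\<^sub>R Emat j i) \<in> span X" for i j
    using assms(1)[of i j] by (cases "M$i$j = 0") (auto intro: span_mul simp: span_zero)
  have "(\<Sum>i\<in>UNIV. \<Sum>j\<in>UNIV. (M$i$j / 2) *\<^sub>R (Emat i j + s *\<^sub>R Emat j i)) $ a $ c = M $ a $ c" for a c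
  proof -
    have "(\<Sum>i\<in>UNIV. \<Sum>j\<in>UNIV. (M$i$j / 2) *\<^sub>R (Emat i j + s *\<^sub>R Emat j i)) $ a $ c
        = (\<Sum>i\<in>UNIV. \<Sum>j\<in>UNIV. (if a = i \<and> c = j then M$i$j/2 else 0))
          + (\<Sum>i\<in>UNIV. \<Sum>j\<in>UNIV. (if c = i \<and> a = j then s * M$i$j/2 else 0))"
      by (simp add: sum_component Emat_def sum.distrib algebra_simps if_distrib cong: if_cong)
         (intro arg_cong2[where f="(+)"] sum.cong refl, auto)+
    also have "\<dots> = M$a$c/2 + s * M$c$a/2" by (simp only: sum_delta2)
    also have "\<dots> = M$a$c" using assms(2)[of a c] assms(3)
      by (simp add: algebra_simps)
    finally show ?thesis .
  qed
  then have "M = (\<Sum>i\<in>UNIV. \<Sum>j\<in>UNIV. (M$i$j / 2) *\<^sub>R (Emat i j + s *\<^sub>R Emat j i))"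
    by (simp add: vec_eq_iff)
  moreover have "(\<Sum>i\<in>UNIV. \<Sum>j\<in>UNIV. (M$i$j / 2) *\<^sub>R (Emat i j + s *\<^sub>R Emat j i)) \<in> span X"
    using h by (intro span_sum) auto
  ultimately show ?thesis by simp
qed



definition LJ :: "'n set \<Rightarrow> (real^'n^'n) set" where
  "LJ J = {G. \<forall>i j. G$i$j \<noteq> 0 \<longrightarrow> i \<in> J \<and> j \<notin> J}"
definition TJ :: "'n set \<Rightarrow> (real^'n^'n) set" where
  "TJ J = {T. transpose T = T \<and> (\<forall>i j. T$i$j \<noteq> 0 \<longrightarrow> i \<in> J \<and> j \<in> J)}"
definition LG :: "'n set \<Rightarrow> (real^'n^'n) set" where
  "LG J = (\<lambda>(i,j). Emat i j) ` (J \<times> (- J))"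
definition Qm :: "'n set \<Rightarrow> real^'n^'n" where
  "Qm B = (\<chi> a b. if a \<in> B \<and> b \<in> B then 1 else 0)"
definition TG :: "'n set \<Rightarrow> (real^'n^'n) set" where
  "TG J = Qm ` {B. B \<subseteq> J \<and> card B = 1} \<union> Qm ` {B. B \<subseteq> J \<and> card B = 2}"
definition Rm :: "'n set \<Rightarrow> real^'n^'n" where
  "Rm B = (case (SOME (a,b). a \<noteq> b \<and> B = {a,b}) of (a,b) \<Rightarrow> Emat a b - Emat b a)"
definition RG :: "(real^'n^'n) set" where
  "RG = Rm ` {B. B \<subseteq> UNIV \<and> card B = 2}"

lemma card_LG: "card (LG J) \<le> card J * card (- J)"
proof -
  have "card (LG J) \<le> card (J \<times> (- J))" unfolding LG_def by (rule card_image_le) simp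
  then show ?thesis by (simp add: card_cartesian_product)
qed

lemma card_TG: "card (TG J) \<le> card J + (card J choose 2)"
proof -
  have "card (TG J) \<le> card (Qm ` {B. B \<subseteq> J \<and> card B = 1}) + card (Qm ` {B. B \<subseteq> J \<and> card B = 2})"
    unfolding TG_def by (rule card_Un_le)
  also have "\<dots> \<le> card {B. B \<subseteq> J \<and> card B = 1} + card {B. B \<subseteq> J \<and> card B = 2}"
    by (intro add_mono card_image_le) simp_all
  also have "\<dots> = card J + (card J choose 2)" by (simp add: n_subsets)
  finally show ?thesis .
qed

lemma card_RG: "card (RG :: (real^'n^'n) set) \<le> CARD('n) choose 2"
proof -
  have "card (RG :: (real^'n^'n) set) \<le> card {B::'n set. B \<subseteq> UNIV \<and> card B = 2}"
    unfolding RG_def by (rule card_image_le) simp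
  also have "\<dots> = CARD('n) choose 2" by (rule n_subsets) simp
  finally show ?thesis .
qed

lemma finite_LG: "finite (LG J)" unfolding LG_def by simp
lemma finite_TG: "finite (TG J)" unfolding TG_def by simp
lemma finite_RG: "finite RG" unfolding RG_def by simp

lemma LJ_span: "G \<in> LJ J \<Longrightarrow> G \<in> span (LG J)"
  unfolding LJ_def
  by (rule in_span_entries) (auto simp: LG_def intro!: span_base)

lemma TJ_span: assumes "T \<in> TJ J" shows "T \<in> span (TG J)"
proof (rule in_span_pairs[where s=1])
  show "T$j$i = 1 * T$i$j" for i j
  proof -
    have "transpose T = T" using assms unfolding TJ_def by blast
    then have "(transpose T)$i$j = T$i$j" by simp
    then show ?thesis by (simp add: transpose_def)
  qed
  fix i j assume "T$i$j \<noteq> 0"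
  then have ij: "i \<in> J" "j \<in> J" using assms unfolding TJ_def by auto
  have Qi: "Qm {k} = Emat k k" for k by (simp add: Qm_def Emat_def vec_eq_iff)
  have inS: "Qm {k} \<in> span (TG J)" if "k \<in> J" for k
    using that by (intro span_base) (auto simp: TG_def)
  show "Emat i j + 1 *\<^sub>R Emat j i \<in> span (TG J)"
  proof (cases "i = j")
    case True
    have "Emat i j + 1 *\<^sub>R Emat j i = 2 *\<^sub>R Qm {i}" using True by (simp add: Qi scaleR_2)
    then show ?thesis using inS[OF ij(1)] by (simp add: span_mul)
  next
    case False
    have "Qm {i, j} \<in> span (TG J)" using ij False by (intro span_base) (auto simp: TG_def)
    moreover have "Emat i j + 1 *\<^sub>R Emat j i = Qm {i, j} - Qm {i} - Qm {j}"
    proof -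
      have "(Emat i j + 1 *\<^sub>R Emat j i)$a$c = (Qm {i, j} - Qm {i} - Qm {j})$a$c" for a c
        using False by (cases "a = i"; cases "c = i"; cases "a = j"; cases "c = j") (simp_all add: Qm_def Emat_def)
      then show ?thesis by (simp add: vec_eq_iff)
    qed
    ultimately show ?thesis using inS ij by (simp add: span_diff)
  qed
qed simp

lemma skew_span: assumes "transpose K = - K" shows "(K::real^'n^'n) \<in> span RG"
proof (rule in_span_pairs[where s="-1"])
  show "K$j$i = -1 * K$i$j" for i j
  proof -
    have "(transpose K)$i$j = (-K)$i$j" using assms by simp
    then show ?thesis by (simp add: transpose_def)
  qed
  fix i j
  show "Emat i j + (-1) *\<^sub>R Emat j i \<in> span RG"
  proof (cases "i = j")
    case True then show ?thesis by (simp add: span_zero)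
  next
    case False
    let ?B = "{i, j}"
    obtain a b where ab: "(SOME (a,b). a \<noteq> b \<and> ?B = {a,b}) = (a, b)"
      by (cases "SOME (a,b). a \<noteq> b \<and> ?B = {a,b}") auto
    have "\<exists>p. (case p of (a,b) \<Rightarrow> a \<noteq> b \<and> ?B = {a,b})" using False by auto
    then have "case (SOME (a,b). a \<noteq> b \<and> ?B = {a,b}) of (a,b) \<Rightarrow> a \<noteq> b \<and> ?B = {a,b}"
      by (rule someI_ex)
    then have ab2: "a \<noteq> b" "?B = {a,b}" using ab by auto
    have R: "Rm ?B = Emat a b - Emat b a" unfolding Rm_def ab by simp
    have inR: "Rm ?B \<in> span RG" using False
      by (intro span_base) (auto simp: RG_def)
    from ab2 have "(a = i \<and> b = j) \<or> (a = j \<and> b = i)" by (auto simp: doubleton_eq_iff)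
    then show ?thesis
    proof
      assume "a = i \<and> b = j" then show ?thesis using inR R by simp
    next
      assume "a = j \<and> b = i"
      then have "Emat i j + (-1) *\<^sub>R Emat j i = - Rm ?B" using R by simp
      then show ?thesis using inR by (simp add: span_neg)
    qed
  qed
qed simp



lemma mm_sub_l: "(A::real^'n^'m) ** (B - C) = A ** B - A ** C"
  by (simp add: matrix_matrix_mult_def vec_eq_iff sum_subtractf algebra_simps)
lemma mm_sub_r: "((A::real^'n^'m) - B) ** C = A ** C - B ** C"
  by (simp add: matrix_matrix_mult_def vec_eq_iff sum_subtractf algebra_simps)
lemma mm_add_r: "((A::real^'n^'m) + B) ** C = A ** C + B ** C"
  by (simp add: matrix_matrix_mult_def vec_eq_iff sum.distrib algebra_simps)

lemma transpose_sub: "transpose ((A::real^'n^'m) - B) = transpose A - transpose B"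
  by (simp add: transpose_def vec_eq_iff)

definition diagm :: "('n \<Rightarrow> real) \<Rightarrow> real^'n^'n" where
  "diagm d = (\<chi> i j. if i = j then d i else 0)"

lemma mm_diag_r: "((M::real^'n^'m) ** diagm d)$i$k = M$i$k * d k"
  by (simp add: matrix_matrix_mult_def diagm_def if_distrib cong: if_cong)
lemma mm_diag_l: "(diagm d ** (M::real^'m^'n))$i$k = d i * M$i$k"
proof -
  have "(diagm d ** M)$i$k = (\<Sum>j\<in>UNIV. (if i = j then d i else 0) * M$j$k)"
    by (simp add: matrix_matrix_mult_def diagm_def)
  also have "\<dots> = (\<Sum>j\<in>UNIV. if i = j then d i * M$j$k else 0)"
    by (rule sum.cong) auto
  finally show ?thesis by simp
qed
lemma transpose_diagm: "transpose (diagm d) = diagm d"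
  by (simp add: transpose_def diagm_def vec_eq_iff)

lemma mm_column: "((A::real^'n^'m) ** B)$a$k = (A *v column k B)$a"
  by (simp add: matrix_matrix_mult_def matrix_vector_mult_def column_def)

lemma chart:
  fixes S :: "real^'n^'n" and Y :: "real^'p^'n"
  assumes St: "transpose S = S" and SY: "S ** Y = 0" and inj: "\<forall>e. Y *v e = 0 \<longrightarrow> e = 0"
  shows "\<exists>J G T. card J + CARD('p) = CARD('n) \<and> G \<in> LJ J \<and> T \<in> TJ J \<and>
           S = transpose (mat 1 - G) ** T ** (mat 1 - G)"
proof -
  let ?f = "\<lambda>e::real^'p. Y *v e"
  define V where "V = range ?f"
  have linf: "linear ?f" by (simp add: matrix_vector_mul_linear)
  have subV: "subspace V" unfolding V_def by (rule linear_subspace_image[OF linf subspace_UNIV])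
  have injf: "inj_on ?f (span UNIV)"
  proof (rule inj_onI)
    fix x y assume "Y *v x = Y *v y"
    then have "Y *v (x - y) = 0" by (simp add: matrix_vector_mult_diff_distrib)
    then show "x = y" using inj by auto
  qed
  have dimV: "dim V = CARD('p)"
    unfolding V_def using dim_image_eq[OF linf injf] by (simp add: dim_UNIV)
  have SV: "S *v v = 0" if "v \<in> V" for v
    using that SY unfolding V_def by (auto simp: matrix_vector_mul_assoc)
  obtain BV where BV: "BV \<subseteq> V" "independent BV" "V \<subseteq> span BV" "card BV = dim V"
    by (rule basis_exists)
  define Ax where "Ax = range (\<lambda>j::'n. axis j (1::real))"
  have AxB: "Ax = Basis" unfolding Ax_def Basis_vec_def by auto
  obtain B where B: "BV \<subseteq> B" "B \<subseteq> BV \<union> Ax" "independent B" "BV \<union> Ax \<subseteq> span B"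
    using maximal_independent_subset_extend[of BV "BV \<union> Ax"] BV(2) by blast
  have spanB: "span B = UNIV"
  proof -
    have "Ax \<subseteq> span B" using B(4) by blast
    then have "span Ax \<subseteq> span B" by (simp add: span_minimal)
    then show ?thesis unfolding AxB span_Basis by blast
  qed
  have finB: "finite B" using B(3) by (rule finiteI_independent)
  have cardB: "card B = CARD('n)"
    using basis_card_eq_dim[of B UNIV] B(3) spanB by (simp add: dim_UNIV)
  define J where "J = {j. axis j (1::real) \<in> B - BV}"
  have BJ: "B - BV = (\<lambda>j. axis j (1::real)) ` J"
    using B(2) unfolding J_def Ax_def by auto
  have injax: "inj (\<lambda>j::'n. axis j (1::real))" by (simp add: inj_def axis_eq_axis)
  have "card (B - BV) = card J" unfolding BJ by (rule card_image) (metis injax inj_on_subset subset_UNIV)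
  moreover have "card (B - BV) = card B - card BV" using finB B(1) by (simp add: card_Diff_subset finite_subset)
  moreover have "card BV \<le> card B" using finB B(1) by (simp add: card_mono)
  ultimately have cardJ: "card J + CARD('p) = CARD('n)" using cardB BV(4) dimV by simp
  define AJ where "AJ = (\<lambda>j. axis j (1::real)) ` J"
  have spanAJ: "w$i = 0" if "w \<in> span AJ" "i \<notin> J" for w i
  proof -
    have "AJ \<subseteq> {x::real^'n. \<forall>i. i \<notin> J \<longrightarrow> x$i = 0}"
      unfolding AJ_def by (auto simp: axis_def)
    moreover have "subspace {x::real^'n. \<forall>i. i \<notin> J \<longrightarrow> x$i = 0}"
      by (auto simp: subspace_def)
    ultimately have "span AJ \<subseteq> {x::real^'n. \<forall>i. i \<notin> J \<longrightarrow> x$i = 0}" by (rule span_minimal)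
    then show ?thesis using that by blast
  qed
  have spanBV: "span BV \<subseteq> V" using BV(1) subV by (rule span_minimal)
  have decomp: "\<exists>w. w \<in> span AJ \<and> axis k 1 - w \<in> V" for k
  proof -
    have "B \<subseteq> BV \<union> AJ" using BJ unfolding AJ_def by blast
    then have "span B \<subseteq> span (BV \<union> AJ)" by (rule span_mono)
    then have "axis k 1 \<in> span (BV \<union> AJ)" using spanB by blast
    then obtain v w where "axis k 1 = v + w" "v \<in> span BV" "w \<in> span AJ"
      unfolding span_Un by blast
    then show ?thesis using spanBV by (intro exI[of _ w]) auto
  qed
  define u where "u k = (SOME w. w \<in> span AJ \<and> axis k 1 - w \<in> V)" for k
  have u: "u k \<in> span AJ" "axis k 1 - u k \<in> V" for k
    using someI_ex[OF decomp[of k]] unfolding u_def by auto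
  define G :: "real^'n^'n" where "G = (\<chi> i k. if k \<notin> J then - (u k)$i else 0)"
  have GL: "G \<in> LJ J"
    unfolding LJ_def G_def using spanAJ[OF u(1)] by auto
  define P :: "real^'n^'n" where "P = diagm (\<lambda>i. if i \<in> J then 1 else 0)"
  define Q :: "real^'n^'n" where "Q = diagm (\<lambda>i. if i \<in> J then 0 else 1)"
  define T :: "real^'n^'n" where "T = (\<chi> i j. if i \<in> J \<and> j \<in> J then S$i$j else 0)"
  have TT: "T \<in> TJ J"
  proof -
    have "transpose T = T"
      unfolding T_def transpose_def vec_eq_iff
    proof (intro allI)
      fix i j
      have "(transpose S)$i$j = S$i$j" using St by simp
      then show "(\<chi> i j. (\<chi> i j. if i \<in> J \<and> j \<in> J then S $ i $ j else 0) $ j $ i) $ i $ j =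
             (\<chi> i j. if i \<in> J \<and> j \<in> J then S $ i $ j else 0) $ i $ j"
        by (auto simp: transpose_def)
    qed
    then show ?thesis unfolding TJ_def T_def by auto
  qed
  have PQ: "P + Q = mat 1" by (simp add: P_def Q_def diagm_def vec_eq_iff mat_def)
  have TP: "T = P ** S ** P"
    by (simp add: vec_eq_iff mm_diag_r mm_diag_l T_def P_def)
  have GQ: "G ** Q = G"
    by (simp add: vec_eq_iff mm_diag_r Q_def G_def)
  have PG: "P ** G = G"
  proof -
    have "(P ** G)$i$k = G$i$k" for i k
      using GL unfolding P_def LJ_def by (auto simp: mm_diag_l)
    then show ?thesis by (simp add: vec_eq_iff)
  qed
  have a: "S ** ((mat 1 + G) ** Q) = 0"
  proof -
    have "column k ((mat 1 + G) ** Q) \<in> V" for k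
    proof (cases "k \<in> J")
      case True
      have "column k ((mat 1 + G) ** Q) = 0"
        using True by (simp add: column_def vec_eq_iff mm_diag_r Q_def)
      then show ?thesis using subV by (simp add: subspace_0)
    next
      case False
      have "column k ((mat 1 + G) ** Q) = axis k 1 - u k"
        using False by (simp add: column_def vec_eq_iff mm_diag_r Q_def G_def mat_def axis_def)
      then show ?thesis using u(2) by simp
    qed
    then have "(S ** ((mat 1 + G) ** Q))$a$k = 0" for a k
      by (simp add: mm_column SV)
    then show ?thesis by (simp add: vec_eq_iff)
  qed
  have c: "S ** P ** (mat 1 - G) = S"
  proof -
    have "S = S ** (P + Q)" by (simp add: PQ)
    also have "\<dots> = S ** P + S ** Q" by (simp add: matrix_add_ldistrib)
    also have "S ** Q = - (S ** G)"
    proof -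
      have "0 = S ** ((mat 1 + G) ** Q)" using a by simp
      also have "\<dots> = S ** Q + S ** G"
        by (simp add: mm_add_r matrix_add_ldistrib GQ)
      finally show ?thesis by (simp add: eq_neg_iff_add_eq_0)
    qed
    also have "S ** G = S ** P ** G" by (simp add: PG flip: matrix_mul_assoc)
    finally have "S = S ** P - S ** P ** G" by simp
    then show ?thesis by (simp add: mm_sub_l)
  qed
  have d: "transpose (mat 1 - G) ** P ** S = S"
  proof -
    have "transpose (S ** P ** (mat 1 - G)) = transpose S" using c by simp
    then show ?thesis
      by (simp add: matrix_transpose_mul St P_def transpose_diagm matrix_mul_assoc)
  qed
  have "S = transpose (mat 1 - G) ** P ** S ** P ** (mat 1 - G)"
    using c d by (metis matrix_mul_assoc)
  also have "\<dots> = transpose (mat 1 - G) ** T ** (mat 1 - G)"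
    by (simp add: TP matrix_mul_assoc)
  finally show ?thesis using cardJ GL TT by blast
qed



lemma bb_mult: "bounded_bilinear ((**) :: real^'n^'n \<Rightarrow> real^'n^'n \<Rightarrow> real^'n^'n)"
proof -
  have "bilinear ((**) :: real^'n^'n \<Rightarrow> real^'n^'n \<Rightarrow> real^'n^'n)"
    unfolding bilinear_def
  proof (intro conjI allI)
    fix x :: "real^'n^'n"
    show "linear ((**) x)"
      by (rule linearI) (simp_all add: matrix_add_ldistrib matrix_matrix_mult_def vec_eq_iff
          sum_distrib_left sum.distrib algebra_simps)
  next
    fix y :: "real^'n^'n"
    show "linear (\<lambda>x. x ** y)"
      by (rule linearI) (simp_all add: mm_add_r matrix_matrix_mult_def vec_eq_iff
          sum_distrib_left sum.distrib algebra_simps)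
  qed
  then show ?thesis by (simp add: bilinear_conv_bounded_bilinear)
qed

lemma diff_mm:
  fixes f g :: "'a::real_normed_vector \<Rightarrow> real^'n^'n"
  assumes "f differentiable (at x)" "g differentiable (at x)"
  shows "(\<lambda>x. f x ** g x) differentiable (at x)"
  using assms bounded_bilinear.FDERIV[OF bb_mult] unfolding differentiable_def by blast

type_synonym ('n) sq = "real^'n^'n"

definition Fp :: "('n::finite) sq \<times> (('n::finite) sq \<times> ('n::finite) sq) \<Rightarrow> ('n::finite) sq" where
  "Fp x = transpose (mat 1 - fst x) ** fst (snd x) ** (mat 1 - fst x) + snd (snd x)"

lemma linear_transpose: "linear (transpose :: real^'n^'m \<Rightarrow> real^'m^'n)"
  by (rule linearI) (simp_all add: transpose_def vec_eq_iff)

lemma Fp_comp_diff: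
  fixes \<phi> :: "'a::euclidean_space \<Rightarrow> ('n::finite) sq \<times> (('n::finite) sq \<times> ('n::finite) sq)"
  assumes lin: "linear \<phi>"
  shows "(Fp \<circ> \<phi>) differentiable (at y)"
proof -
  have l1: "linear (\<lambda>y. fst (\<phi> y))" using linear_compose[OF lin linear_fst] by (simp add: o_def)
  have l2: "linear (\<lambda>y. fst (snd (\<phi> y)))"
    using linear_compose[OF linear_compose[OF lin linear_snd] linear_fst] by (simp add: o_def)
  have l3: "linear (\<lambda>y. snd (snd (\<phi> y)))"
    using linear_compose[OF linear_compose[OF lin linear_snd] linear_snd] by (simp add: o_def)
  have l4: "linear (\<lambda>y. transpose (fst (\<phi> y)))"
    using linear_compose[OF l1 linear_transpose] by (simp add: o_def)
  have e: "(Fp \<circ> \<phi>) = (\<lambda>y. (mat 1 - transpose (fst (\<phi> y))) ** fst (snd (\<phi> y)) ** (mat 1 - fst (\<phi> y))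
        + snd (snd (\<phi> y)))"
    by (simp add: Fp_def o_def transpose_sub transpose_mat)
  show ?thesis unfolding e
    by (intro differentiable_add diff_mm differentiable_diff differentiable_const
        linear_imp_differentiable l1 l2 l3 l4)
qed

lemma neg_image:
  fixes P :: "(('n::finite) sq \<times> (('n::finite) sq \<times> ('n::finite) sq)) set"
  assumes sP: "subspace P" and dP: "dim P < CARD('n) * CARD('n)"
  shows "negligible (Fp ` P)"
proof -
  have "dim P \<le> dim (UNIV :: (real^'n^'n) set)" using dP by (simp add: dim_UNIV)
  then obtain D :: "(real^'n^'n) set" where D: "subspace D" "dim D = dim P"
    using choose_subspace_of_subspace[of "dim P" "UNIV :: (real^'n^'n) set"] by blast
  obtain \<phi> where \<phi>: "linear \<phi>" "\<phi> ` D = P"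
    using subspace_isomorphism[OF D(1) sP D(2)] by blast
  have "negligible D" by (rule negligible_lowdim) (use D(2) dP in simp)
  then have "negligible ((Fp \<circ> \<phi>) ` D)"
    by (rule negligible_differentiable_image_negligible[OF order_refl])
       (use Fp_comp_diff[OF \<phi>(1)] in \<open>auto intro: differentiable_at_imp_differentiable_on\<close>)
  then show ?thesis by (simp add: \<phi>(2)[symmetric] image_image o_def)
qed



lemma ch2: "2 * (k choose 2) + k = k * k"
proof (induction k)
  case 0 then show ?case by simp
next
  case (Suc k)
  have "Suc k choose 2 = (k choose 1) + (k choose 2)"
    using binomial_Suc_Suc[of k 1] by (simp add: numeral_2_eq_2)
  then show ?case using Suc by simp
qed

lemma count_arith:
  fixes r p n d :: nat
  assumes "r + p = n" "d < (p + 1) choose 2"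
  shows "r * p + (r + (r choose 2)) + (d + (n choose 2)) < n * n"
proof -
  have a: "2 * (r choose 2) + r = r * r" by (rule ch2)
  have b: "2 * (n choose 2) + n = n * n" by (rule ch2)
  have c: "2 * ((p+1) choose 2) + (p + 1) = (p+1) * (p+1)" by (rule ch2)
  have e0: "n * n = (r + p) * (r + p)" using assms(1) by simp
  have e1: "n * n = r * r + 2 * (r * p) + p * p" unfolding e0 by (simp add: algebra_simps)
  have e2: "(p+1) * (p+1) = p * p + 2 * p + 1" by (simp add: algebra_simps)
  show ?thesis using a b c e1 e2 assms by linarith
qed

lemma dim_un_le:
  fixes X R :: "'a::euclidean_space set"
  assumes "finite R"
  shows "dim (X \<union> R) \<le> dim X + card R"
proof -
  obtain B where B: "B \<subseteq> X" "independent B" "X \<subseteq> span B" "card B = dim X"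
    by (rule basis_exists)
  have fB: "finite B" using B(2) by (rule finiteI_independent)
  have "X \<union> R \<subseteq> span (B \<union> R)" using B(3) span_mono[of B "B \<union> R"] span_superset[of "B \<union> R"]
    by blast
  then have "dim (X \<union> R) \<le> card (B \<union> R)" using fB assms by (intro dim_le_card) auto
  also have "\<dots> \<le> card B + card R" by (rule card_Un_le)
  finally show ?thesis using B(4) by simp
qed

lemma sym_part_sym: "transpose (sym_part M) = sym_part (M::real^'n^'n)"
  by (simp add: sym_part_def transpose_def vec_eq_iff algebra_simps)

lemma card_compl: "card (- (J::'n::finite set)) = CARD('n) - card J"
  by (simp add: Compl_eq_Diff_UNIV card_Diff_subset)

definition PP :: "(nat \<Rightarrow> real^'n^'n) \<Rightarrow> 'n set \<Rightarrow> nat set \<Rightarrow> ('n::finite sq \<times> ('n sq \<times> 'n sq)) set" where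
  "PP A J I = span (LG J) \<times> (span (TG J) \<times> span (A ` I \<union> RG))"

lemma PP_negligible:
  fixes A :: "nat \<Rightarrow> real^'n^'n"
  assumes "card J + p = CARD('n)" "dim (A ` I) < (p + 1) choose 2"
  shows "negligible (Fp ` PP A J I)"
proof (rule neg_image)
  show "subspace (PP A J I)" unfolding PP_def
    by (intro subspace_Times subspace_span)
  have "dim (PP A J I) = dim (LG J) + (dim (TG J) + dim (A ` I \<union> RG))"
  proof -
    have "dim (PP A J I) = dim (span (LG J)) + dim (span (TG J) \<times> span (A ` I \<union> RG))"
      unfolding PP_def by (rule dim_Times) (simp_all add: subspace_Times subspace_span)
    also have "dim (span (TG J) \<times> span (A ` I \<union> RG)) = dim (span (TG J)) + dim (span (A ` I \<union> RG))"
      by (rule dim_Times) (simp_all add: subspace_span)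
    finally show ?thesis by simp
  qed
  also have "\<dots> \<le> card (LG J) + (card (TG J) + (dim (A ` I) + card (RG :: (real^'n^'n) set)))"
    by (intro add_mono dim_un_le dim_le_card' finite_LG finite_TG finite_RG order_refl)
  also have "\<dots> \<le> card J * p + ((card J + (card J choose 2)) + (dim (A ` I) + (CARD('n) choose 2)))"
  proof -
    have "CARD('n) - card J = p" using assms(1) by simp
    then have "card (LG J) \<le> card J * p" using card_LG[of J] card_compl[of J] by simp
    moreover have "card (RG :: (real^'n^'n) set) \<le> CARD('n) choose 2" by (rule card_RG)
    ultimately show ?thesis using card_TG[of J] by linarith
  qed
  also have "\<dots> < CARD('n) * CARD('n)"
    using count_arith[OF assms(1) assms(2)] by (simp add: algebra_simps)
  finally show "dim (PP A J I) < CARD('n) * CARD('n)" .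
qed



theorem theorem1:
  fixes A :: "nat \<Rightarrow> real^'n^'n" and b :: "nat \<Rightarrow> real" and m1 m2 :: nat
  assumes "\<forall>i<m1 + m2. sym_mat (A i)"
    and "\<exists>X. feasible A b m1 m2 X"
    and "tau CARD('p) > mprime A b m1 m2"
  shows "\<exists>N. {M::real^'n^'n. sym_part M \<in> N} \<in> null_sets lebesgue \<and>
    (\<forall>C. sym_mat C \<and> C \<notin> N \<and> sdp_attains C A b m1 m2 \<longrightarrow>
       (\<forall>Y::real^'p^'n. two_critical C A b m1 m2 Y \<longrightarrow>
          bm_global_min C A b m1 m2 Y \<and> sdp_opt C A b m1 m2 (gram Y)))"
proof -
  note Asym = assms(1)
  let ?m = "m1 + m2"
  define N where "N = {C. \<exists>(Y::real^'p^'n) lam. (\<forall>e. Y *v e = 0 \<longrightarrow> e = 0) \<and>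
      crit1_mult C A b m1 m2 Y lam \<and> feasible A b m1 m2 (gram Y)}"
  define Fam where "Fam = (\<lambda>(J, I). Fp ` PP A J I) `
      {(J, I). J \<in> Pow (UNIV::'n set) \<and> card J + CARD('p) = CARD('n) \<and> I \<in> Pow {..<?m} \<and>
         dim (A ` I) \<le> mprime A b m1 m2}"
  have finFam: "finite Fam"
  proof -
    have "{(J, I). J \<in> Pow (UNIV::'n set) \<and> card J + CARD('p) = CARD('n) \<and> I \<in> Pow {..<?m} \<and>
         dim (A ` I) \<le> mprime A b m1 m2} \<subseteq> Pow UNIV \<times> Pow {..<?m}" by auto
    then show ?thesis unfolding Fam_def by (rule finite_imageI[OF finite_subset]) simp
  qed
  have negFam: "negligible T" if TF: "T \<in> Fam" for T
  proof -
    obtain J I where Teq: "T = Fp ` PP A J I" and c: "card J + CARD('p) = CARD('n)"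
      and d: "dim (A ` I) \<le> mprime A b m1 m2"
      using TF unfolding Fam_def by auto
    have "dim (A ` I) < (CARD('p) + 1) choose 2" using d assms(3) unfolding tau_def by simp
    then show ?thesis unfolding Teq by (rule PP_negligible[OF c])
  qed
  have sub: "{M::real^'n^'n. sym_part M \<in> N} \<subseteq> \<Union> Fam"
  proof
    fix M :: "real^'n^'n" assume "M \<in> {M. sym_part M \<in> N}"
    then obtain Y :: "real^'p^'n" and lam where inj: "\<forall>e. Y *v e = 0 \<longrightarrow> e = 0"
      and cm: "crit1_mult (sym_part M) A b m1 m2 Y lam" and fY: "feasible A b m1 m2 (gram Y)"
      unfolding N_def by blast
    define I where "I = active A b m1 m2 (gram Y)"
    have Isub: "I \<subseteq> {..<?m}" unfolding I_def active_def by auto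
    have dI: "dim (A ` I) \<le> mprime A b m1 m2"
    proof -
      have fin: "finite {dim (A ` active A b m1 m2 X) | X. feasible A b m1 m2 X}"
      proof (rule finite_subset)
        show "{dim (A ` active A b m1 m2 X) | X. feasible A b m1 m2 X} \<subseteq> {..DIM(real^'n^'n)}"
        proof
          fix x assume "x \<in> {dim (A ` active A b m1 m2 X) | X. feasible A b m1 m2 X}"
          then obtain X where "x = dim (A ` active A b m1 m2 X)" by blast
          moreover have "dim (A ` active A b m1 m2 X) \<le> DIM(real^'n^'n)" by (rule dim_subset_UNIV)
          ultimately show "x \<in> {..DIM(real^'n^'n)}" by simp
        qed
      qed simp
      show ?thesis unfolding mprime_def I_def using fY by (intro Max_ge[OF fin]) blast
    qed
    let ?S = "Smat (sym_part M) A ?m lam"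
    have St: "transpose ?S = ?S"
      by (rule sym_Smat) (use Asym sym_part_sym in \<open>auto simp: sym_mat_def\<close>)
    have SY: "?S ** Y = 0" using cm unfolding crit1_mult_def by blast
    obtain J G T where J: "card J + CARD('p) = CARD('n)" and G: "G \<in> LJ J" and T: "T \<in> TJ J"
      and Seq: "?S = transpose (mat 1 - G) ** T ** (mat 1 - G)"
      using chart[OF St SY inj] by blast
    define w where "w = (\<Sum>i<?m. lam i *\<^sub>R A i)"
    define K where "K = M - sym_part M"
    have wspan: "w \<in> span (A ` I)"
      unfolding w_def
    proof (intro span_sum)
      fix i assume i: "i \<in> {..<?m}"
      show "lam i *\<^sub>R A i \<in> span (A ` I)"
      proof (cases "i \<in> I")
        case True then show ?thesis by (intro span_mul span_base) simp
      next
        case False then have "lam i = 0" using cm i unfolding crit1_mult_def I_def by auto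
        then show ?thesis by (simp add: span_zero)
      qed
    qed
    have Kspan: "K \<in> span RG"
    proof (rule skew_span)
      show "transpose K = - K"
        by (simp add: K_def sym_part_def transpose_def vec_eq_iff algebra_simps)
    qed
    have wK: "w + K \<in> span (A ` I \<union> RG)"
      using wspan Kspan span_mono[of "A ` I" "A ` I \<union> RG"] span_mono[of RG "A ` I \<union> RG"]
      by (auto intro: span_add)
    have Meq: "M = Fp (G, (T, w + K))"
    proof -
      have "Fp (G, (T, w + K)) = ?S + w + K" unfolding Fp_def using Seq by (simp add: add.assoc)
      also have "\<dots> = M" unfolding Smat_def w_def K_def by simp
      finally show ?thesis by simp
    qed
    have "(G, (T, w + K)) \<in> PP A J I"
      unfolding PP_def using LJ_span[OF G] TJ_span[OF T] wK by simp
    then have "M \<in> Fp ` PP A J I" using Meq by blast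
    moreover have "Fp ` PP A J I \<in> Fam"
      unfolding Fam_def using J Isub dI by blast
    ultimately show "M \<in> \<Union> Fam" by blast
  qed
  have "negligible (\<Union> Fam)" by (rule negligible_Union[OF finFam negFam])
  then have "negligible {M::real^'n^'n. sym_part M \<in> N}" by (rule negligible_subset[OF _ sub])
  then have null: "{M::real^'n^'n. sym_part M \<in> N} \<in> null_sets lebesgue"
    by (simp add: negligible_iff_null_sets)
  have good: "bm_global_min C A b m1 m2 Y \<and> sdp_opt C A b m1 m2 (gram Y)"
    if C: "sym_mat C" "C \<notin> N" and tc: "two_critical C A b m1 m2 Y" for C and Y :: "real^'p^'n"
  proof -
    from tc obtain lam where "feasible A b m1 m2 (gram Y)" "crit1_mult C A b m1 m2 Y lam"
      unfolding two_critical_def by blast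
    then have "\<not> (\<forall>e. Y *v e = 0 \<longrightarrow> e = 0)" using C(2) unfolding N_def by blast
    then obtain e where "Y *v e = 0" "e \<noteq> 0" by blast
    then show ?thesis by (rule lowrank_opt[OF Asym C(1) tc])
  qed
  show ?thesis using null good by blast
qed

end
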